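(* Let $\mathcal{H}$ be a finite-dimensional Hilbert space, $U$ a unitary on $\mathcal{H}$ and $\Pi,\widetilde\Pi$ orthogonal projectors on $\mathcal{H}$. Let $n\ge1$, $\Phi=(\phi_1,\ldots,\phi_n)\in\mathbb{R}^n$, and let $P\in\mathbb{C}[x]$ be a polynomial of degree at most $n$ such that for all $x\in[-1,1]$ the top-left entry of $\prod_{j=1}^n\left(e^{i\phi_j\sigma_z}R(x)\right)$ equals $P(x)$ (such a $P$ exists and has parity $(n\bmod 2)$). Then $$P^{(SV)}(\widetilde\Pi U\Pi)=\begin{cases}\widetilde\Pi U_\Phi\Pi & \text{if } n \text{ is odd},\\ \Pi U_\Phi\Pi & \text{if } n\text{ is even}.\end{cases}$$
   Context: $\sigma_z=\mathrm{diag}(1,-1)$; $R(x)=\begin{pmatrix} x & \sqrt{1-x^2}\\ \sqrt{1-x^2} & -x\end{pmatrix}$; $\prod_{j=1}^n M_j=M_1\cdots M_n$. Alternating phase modulation sequence: for $n$ odd, $U_\Phi:=e^{i\phi_1(2\widetilde\Pi-I)}U\prod_{j=1}^{(n-1)/2}\left(e^{i\phi_{2j}(2\Pi-I)}U^\dagger e^{i\phi_{2j+1}(2\widetilde\Pi-I)}U\right)$; for $n$ even, $U_\Phi:=\prod_{j=1}^{n/2}\left(e^{i\phi_{2j-1}(2\Pi-I)}U^\dagger e^{i\phi_{2j}(2\widetilde\Pi-I)}U\right)$. Singular value transformation: let $A=\widetilde\Pi U\Pi$, $d=\mathrm{rank}\,\Pi$, $\tilde d=\mathrm{rank}\,\widetilde\Pi$,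 $d_{\min}=\min(d,\tilde d)$, and write $A=\sum_{i=1}^{d_{\min}}\varsigma_i|\tilde\psi_i\rangle\langle\psi_i|$ with $\varsigma_i\ge0$, $(|\psi_i\rangle)_{i\in[d]}$ an orthonormal basis of $\mathrm{img}\,\Pi$ and $(|\tilde\psi_i\rangle)_{i\in[\tilde d]}$ an orthonormal basis of $\mathrm{img}\,\widetilde\Pi$; set $\varsigma_i:=0$ for $d_{\min}<i\le d$. For an odd function $f$, $f^{(SV)}(A):=\sum_{i=1}^{d_{\min}}f(\varsigma_i)|\tilde\psi_i\rangle\langle\psi_i|$; for an even $f$, $f^{(SV)}(A):=\sum_{i=1}^{d}f(\varsigma_i)|\psi_i\rangle\langle\psi_i|$. *)

theory Defs
  imports "HOL-Analysis.Analysis"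
begin

(* Finite-dimensional Hilbert space modelled as complex^'n for a finite index type 'n;
   operators are complex matrices complex^'n^'n acting by matrix-vector product. *)

definition cmat_scale :: "complex \<Rightarrow> complex^'n^'m \<Rightarrow> complex^'n^'m" where
  "cmat_scale c M = (\<chi> i j. c * M $ i $ j)"

definition adj :: "complex^'n^'m \<Rightarrow> complex^'m^'n" where
  "adj M = (\<chi> i j. cnj (M $ j $ i))"

definition cinner :: "complex^'n \<Rightarrow> complex^'n \<Rightarrow> complex" where
  "cinner v w = (\<Sum>i\<in>UNIV. cnj (v $ i) * w $ i)"

definition outer :: "complex^'m \<Rightarrow> complex^'n \<Rightarrow> complex^'n^'m" where
  "outer a b = (\<chi> i j. a $ i * cnj (b $ j))"

definition unitary_mat :: "complex^'n^'n \<Rightarrow> bool" where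
  "unitary_mat U \<longleftrightarrow> adj U ** U = mat 1 \<and> U ** adj U = mat 1"

definition orth_proj :: "complex^'n^'n \<Rightarrow> bool" where
  "orth_proj P \<longleftrightarrow> P ** P = P \<and> adj P = P"

primrec mpow :: "complex^'n^'n \<Rightarrow> nat \<Rightarrow> complex^'n^'n" where
  "mpow M 0 = mat 1"
| "mpow M (Suc k) = M ** mpow M k"

definition mexp :: "complex^'n^'n \<Rightarrow> complex^'n^'n" where
  "mexp M = (\<Sum>k. (1 / fact k) *\<^sub>R mpow M k)"

primrec mprod :: "(nat \<Rightarrow> complex^'n^'n) \<Rightarrow> nat \<Rightarrow> complex^'n^'n" where
  "mprod f 0 = mat 1"
| "mprod f (Suc m) = mprod f m ** f (Suc m)"

definition phase_op :: "real \<Rightarrow> complex^'n^'n \<Rightarrow> complex^'n^'n" where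
  "phase_op phi Pr = mexp (cmat_scale (\<i> * complex_of_real phi) (cmat_scale 2 Pr - mat 1))"

(* alternating phase modulation sequence U_Phi; phi indexed by 1..n *)
definition U_Phi :: "nat \<Rightarrow> (nat \<Rightarrow> real) \<Rightarrow> complex^'n^'n \<Rightarrow> complex^'n^'n \<Rightarrow> complex^'n^'n
                      \<Rightarrow> complex^'n^'n" where
  "U_Phi n phi U Pr Prt =
     (if odd n then
        phase_op (phi 1) Prt ** U **
        mprod (\<lambda>j. phase_op (phi (2*j)) Pr ** adj U ** phase_op (phi (2*j+1)) Prt ** U) ((n - 1) div 2)
      else
        mprod (\<lambda>j. phase_op (phi (2*j-1)) Pr ** adj U ** phase_op (phi (2*j)) Prt ** U) (n div 2))"

(* 2x2 matrices: indices 1,2 of type 2; entry (1,1) is the top-left entry *)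
definition sigma_z :: "complex^2^2" where
  "sigma_z = vector [vector [1, 0], vector [0, -1]]"

definition Rmat :: "real \<Rightarrow> complex^2^2" where
  "Rmat x = vector [vector [complex_of_real x, complex_of_real (sqrt (1 - x^2))],
                    vector [complex_of_real (sqrt (1 - x^2)), - complex_of_real x]]"

definition qsp_prod :: "nat \<Rightarrow> (nat \<Rightarrow> real) \<Rightarrow> real \<Rightarrow> complex^2^2" where
  "qsp_prod n phi x = mprod (\<lambda>j. mexp (cmat_scale (\<i> * complex_of_real (phi j)) sigma_z) ** Rmat x) n"

definition onb_of_img :: "complex^'n^'n \<Rightarrow> nat \<Rightarrow> (nat \<Rightarrow> complex^'n) \<Rightarrow> bool" where
  "onb_of_img Pr d psi \<longleftrightarrow>
     (\<forall>i<d. \<forall>j<d. cinner (psi i) (psi j) = (if i = j then 1 else 0)) \<and>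
     (\<forall>i<d. psi i \<in> range (\<lambda>v. Pr *v v)) \<and>
     (\<forall>w \<in> range (\<lambda>v. Pr *v v). \<exists>c. w = (\<Sum>i<d. c i *s psi i))"

definition sv_decomp :: "complex^'n^'n \<Rightarrow> complex^'n^'n \<Rightarrow> complex^'n^'n \<Rightarrow> nat \<Rightarrow> nat
                          \<Rightarrow> (nat \<Rightarrow> real) \<Rightarrow> (nat \<Rightarrow> complex^'n) \<Rightarrow> (nat \<Rightarrow> complex^'n) \<Rightarrow> bool" where
  "sv_decomp Pr Prt A d dt s psi psit \<longleftrightarrow>
     onb_of_img Pr d psi \<and> onb_of_img Prt dt psit \<and>
     (\<forall>i<min d dt. 0 \<le> s i) \<and>
     A = (\<Sum>i<min d dt. cmat_scale (complex_of_real (s i)) (outer (psit i) (psi i)))"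

(* f^(SV)(A) for odd f *)
definition sv_odd :: "(real \<Rightarrow> complex) \<Rightarrow> nat \<Rightarrow> nat \<Rightarrow> (nat \<Rightarrow> real)
                       \<Rightarrow> (nat \<Rightarrow> complex^'n) \<Rightarrow> (nat \<Rightarrow> complex^'n) \<Rightarrow> complex^'n^'n" where
  "sv_odd f d dt s psi psit = (\<Sum>i<min d dt. cmat_scale (f (s i)) (outer (psit i) (psi i)))"

(* f^(SV)(A) for even f, with s_i := 0 for min d dt <= i < d *)
definition sv_even :: "(real \<Rightarrow> complex) \<Rightarrow> nat \<Rightarrow> nat \<Rightarrow> (nat \<Rightarrow> real)
                       \<Rightarrow> (nat \<Rightarrow> complex^'n) \<Rightarrow> complex^'n^'n" where
  "sv_even f d dt s psi =
     (\<Sum>i<d. cmat_scale (f (if i < min d dt then s i else 0)) (outer (psi i) (psi i)))"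

end

theory Submission
  imports Defs
begin

lemma cs_mult_left: "cmat_scale c A ** B = cmat_scale c (A ** B)"
  by (simp add: cmat_scale_def matrix_matrix_mult_def vec_eq_iff sum_distrib_left mult.assoc)
lemma cs_mult_right: "A ** cmat_scale c B = cmat_scale c (A ** B)"
  by (simp add: cmat_scale_def matrix_matrix_mult_def vec_eq_iff sum_distrib_left mult_ac)
lemma cs_add: "cmat_scale c (A + B) = cmat_scale c A + cmat_scale c B"
  by (simp add: cmat_scale_def vec_eq_iff algebra_simps)
lemma cs_diff: "cmat_scale c (A - B) = cmat_scale c A - cmat_scale c B"
  by (simp add: cmat_scale_def vec_eq_iff algebra_simps)
lemma cs_cs: "cmat_scale c (cmat_scale d A) = cmat_scale (c*d) A"
  by (simp add: cmat_scale_def vec_eq_iff algebra_simps)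
lemma cs_addl: "cmat_scale (c+d) A = cmat_scale c A + cmat_scale d A"
  by (simp add: cmat_scale_def vec_eq_iff algebra_simps)
lemma cs_1[simp]: "cmat_scale 1 A = A"
  by (simp add: cmat_scale_def vec_eq_iff)
lemma cs_0[simp]: "cmat_scale 0 A = 0"
  by (simp add: cmat_scale_def vec_eq_iff)
lemma cs_mulv: "cmat_scale c A *v x = c *s (A *v x)"
  by (simp add: cmat_scale_def matrix_vector_mult_def vec_eq_iff sum_distrib_left mult_ac)
lemma mat_diff_ldistrib: "(A::'a::ring_1^'n^'m) ** (B - C) = A ** B - A ** C"
  by (simp add: matrix_matrix_mult_def vec_eq_iff algebra_simps sum_subtractf)
lemma mat_diff_rdistrib: "((A::'a::ring_1^'n^'m) - B) ** C = A ** C - B ** C"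
  by (simp add: matrix_matrix_mult_def vec_eq_iff algebra_simps sum_subtractf)
lemma mat_add_rdistrib: "((A::'a::ring_1^'n^'m) + B) ** C = A ** C + B ** C"
  by (simp add: matrix_matrix_mult_def vec_eq_iff algebra_simps sum.distrib)
lemma cs2: "cmat_scale 2 A = A + A"
  by (simp add: cmat_scale_def vec_eq_iff)

lemma mpow_proj:
  fixes P :: "complex^'n^'n"
  assumes PP: "P ** P = P"
  shows "mpow (cmat_scale z (cmat_scale 2 P - mat 1)) k
       = cmat_scale (z^k) P + cmat_scale ((-z)^k) (mat 1 - P)"
proof (induction k)
  case 0 then show ?case by simp
next
  case (Suc k)
  have XP: "(cmat_scale 2 P - mat 1) ** P = P"
    unfolding mat_diff_rdistrib cs_mult_left PP matrix_mul_lid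
    by (simp add: cmat_scale_def vec_eq_iff)
  have XQ: "(cmat_scale 2 P - mat 1) ** (mat 1 - P) = - (mat 1 - P)"
    unfolding mat_diff_ldistrib XP matrix_mul_rid
    by (simp add: cmat_scale_def vec_eq_iff)
  have "mpow (cmat_scale z (cmat_scale 2 P - mat 1)) (Suc k)
      = cmat_scale z ((cmat_scale 2 P - mat 1) ** (cmat_scale (z^k) P + cmat_scale ((-z)^k) (mat 1 - P)))"
    by (simp only: mpow.simps Suc cs_mult_left)
  also have "\<dots> = cmat_scale z (cmat_scale (z^k) P + cmat_scale ((-z)^k) (- (mat 1 - P)))"
    by (simp only: matrix_add_ldistrib cs_mult_right XP XQ)
  also have "\<dots> = cmat_scale (z ^ Suc k) P + cmat_scale ((- z) ^ Suc k) (mat 1 - P)"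
    by (simp add: cmat_scale_def vec_eq_iff ring_distribs right_diff_distrib)
  finally show ?case .
qed

lemma sR_comp: "((r::real) *\<^sub>R (M::complex^'n^'m)) $ i $ j = complex_of_real r * M $ i $ j"
  by (simp only: vector_scaleR_component scaleR_conv_of_real[where 'a=complex])

lemma sR_cs: "(r::real) *\<^sub>R (M::complex^'n^'m) = cmat_scale (complex_of_real r) M"
  by (simp add: vec_eq_iff cmat_scale_def scaleR_conv_of_real[where 'a=complex])

lemma bl_cs: "bounded_linear (\<lambda>t::complex. cmat_scale t (A::complex^'n^'m))"
proof -
  have "linear (\<lambda>t::complex. cmat_scale t A)"
    by (rule linearI) (simp_all add: cmat_scale_def vec_eq_iff algebra_simps sR_comp)
  then show ?thesis by (simp add: linear_conv_bounded_linear)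
qed

lemma sdiv: "(x::complex) /\<^sub>R r = complex_of_real (1/r) * x"
  by (simp add: scaleR_conv_of_real divide_inverse mult.commute)

lemma mexp_proj:
  fixes P :: "complex^'n^'n"
  assumes PP: "P ** P = P"
  shows "mexp (cmat_scale z (cmat_scale 2 P - mat 1))
       = cmat_scale (exp z) P + cmat_scale (exp (-z)) (mat 1 - P)"
proof -
  have "(\<lambda>k. cmat_scale (z^k /\<^sub>R fact k) P + cmat_scale ((-z)^k /\<^sub>R fact k) (mat 1 - P))
        sums (cmat_scale (exp z) P + cmat_scale (exp (-z)) (mat 1 - P))"
    by (intro sums_add bounded_linear.sums[OF bl_cs] exp_converges)
  moreover have "(\<lambda>k. cmat_scale (z^k /\<^sub>R fact k) P + cmat_scale ((-z)^k /\<^sub>R fact k) (mat 1 - P))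
      = (\<lambda>k. (1 / fact k) *\<^sub>R mpow (cmat_scale z (cmat_scale 2 P - mat 1)) k)"
    unfolding mpow_proj[OF PP] sR_cs cs_add cs_cs sdiv ..
  ultimately show ?thesis unfolding mexp_def by (simp only: sums_unique[symmetric])
qed

lemma sum_mulv: "(\<Sum>i\<in>I. M i) *v x = (\<Sum>i\<in>I. M i *v (x::complex^'n))"
  by (induct I rule: infinite_finite_induct) (simp_all add: matrix_vector_mult_add_rdistrib)

lemma mulv_sum: "(M::complex^'n^'m) *v (\<Sum>i\<in>I. x i) = (\<Sum>i\<in>I. M *v x i)"
  by (induct I rule: infinite_finite_induct) (simp_all add: matrix_vector_right_distrib)

lemma adj_adj[simp]: "adj (adj M) = M"
  by (simp add: adj_def vec_eq_iff)

lemma adj_mult: "adj (A ** B) = adj B ** adj (A::complex^'n^'m)"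
  by (simp add: adj_def matrix_matrix_mult_def vec_eq_iff mult.commute)

lemma adj_add: "adj (A + B) = adj A + adj (B::complex^'n^'m)"
  by (simp add: adj_def vec_eq_iff)

lemma adj_0[simp]: "adj 0 = 0"
  by (simp add: adj_def vec_eq_iff)

lemma adj_sum: "adj (\<Sum>i\<in>I. M i) = (\<Sum>i\<in>I. adj (M i::complex^'n^'m))"
  by (induct I rule: infinite_finite_induct) (simp_all add: adj_add)

lemma adj_cs_outer: "adj (cmat_scale (complex_of_real r) (outer a b)) = cmat_scale (complex_of_real r) (outer b a)"
  by (simp add: adj_def cmat_scale_def outer_def vec_eq_iff)

lemma cinner_adj: "cinner (M *v x) y = cinner x (adj M *v y)"
  unfolding cinner_def matrix_vector_mult_def adj_def
  apply (simp add: sum_distrib_left sum_distrib_right)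
  apply (subst sum.swap)
  apply (simp add: mult_ac)
  done

lemma cinner_add_right: "cinner x (y + z) = cinner x y + cinner x z"
  by (simp add: cinner_def algebra_simps sum.distrib)
lemma cinner_diff_right: "cinner x (y - z) = cinner x y - cinner x z"
  by (simp add: cinner_def algebra_simps sum_subtractf)
lemma cinner_scale_right: "cinner x (c *s y) = c * cinner x y"
  by (simp add: cinner_def sum_distrib_left mult_ac)
lemma cinner_add_left: "cinner (x + y) z = cinner x z + cinner y z"
  by (simp add: cinner_def algebra_simps sum.distrib)
lemma cinner_diff_left: "cinner (x - y) z = cinner x z - cinner y z"
  by (simp add: cinner_def algebra_simps sum_subtractf)
lemma cinner_scale_left: "cinner (c *s x) y = cnj c * cinner x y"
  by (simp add: cinner_def sum_distrib_left mult_ac)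
lemma cinner_zero_right[simp]: "cinner x 0 = 0"
  by (simp add: cinner_def)
lemma cinner_zero_left[simp]: "cinner 0 x = 0"
  by (simp add: cinner_def)
lemma cinner_sum_right: "cinner x (\<Sum>i\<in>I. y i) = (\<Sum>i\<in>I. cinner x (y i))"
  by (induct I rule: infinite_finite_induct) (simp_all add: cinner_add_right)
lemma cinner_cnj: "cnj (cinner x y) = cinner y x"
  by (simp add: cinner_def mult.commute)

lemma cinner_self: "cinner x x = complex_of_real (\<Sum>i\<in>UNIV. (cmod (x $ i))^2)"
  unfolding cinner_def of_real_sum
  by (intro sum.cong refl) (metis complex_norm_square of_real_power mult.commute)

lemma cinner_self_eq0: "cinner x x = 0 \<Longrightarrow> x = 0"
proof -
  assume h: "cinner x x = 0"
  then have "(\<Sum>i\<in>UNIV. (cmod (x $ i))^2) = 0" by (metis cinner_self of_real_eq_0_iff)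
  then have h2: "\<forall>i\<in>UNIV. (cmod (x $ i))^2 = 0" by (subst (asm) sum_nonneg_eq_0_iff) auto
  show "x = 0"
  proof (subst vec_eq_iff, intro allI)
    fix i
    from h2 have "(cmod (x $ i))^2 = 0" by blast
    then show "x $ i = 0 $ i" by simp
  qed
qed

lemma outer_mulv: "outer a b *v x = cinner b x *s a"
  by (simp add: outer_def matrix_vector_mult_def cinner_def vec_eq_iff sum_distrib_left mult_ac)

lemma unitary_left: "unitary_mat U \<Longrightarrow> adj U *v (U *v x) = x"
  by (simp add: unitary_mat_def matrix_vector_mul_assoc)
lemma unitary_right: "unitary_mat U \<Longrightarrow> U *v (adj U *v x) = x"
  by (simp add: unitary_mat_def matrix_vector_mul_assoc)

lemma proj_idem: "orth_proj P \<Longrightarrow> P *v (P *v x) = P *v x"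
  by (simp add: orth_proj_def matrix_vector_mul_assoc)

lemma proj_sym: "orth_proj P \<Longrightarrow> cinner (P *v x) y = cinner x (P *v y)"
  by (simp add: orth_proj_def cinner_adj)

lemma phase_op_eq: "P ** P = P \<Longrightarrow> phase_op phi P =
   cmat_scale (exp (\<i> * complex_of_real phi)) P + cmat_scale (exp (- (\<i> * complex_of_real phi))) (mat 1 - P)"
  unfolding phase_op_def by (rule mexp_proj)

lemma phase_img: "P ** P = P \<Longrightarrow> P *v a = a \<Longrightarrow> phase_op phi P *v a = exp (\<i> * complex_of_real phi) *s a"
  by (simp add: phase_op_eq matrix_vector_mult_add_rdistrib cs_mulv matrix_vector_mult_diff_rdistrib)

lemma phase_ker: "P ** P = P \<Longrightarrow> P *v a = 0 \<Longrightarrow> phase_op phi P *v a = exp (- (\<i> * complex_of_real phi)) *s a"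
  by (simp add: phase_op_eq matrix_vector_mult_add_rdistrib cs_mulv matrix_vector_mult_diff_rdistrib)

definition E11 :: "complex^2^2" where "E11 = (\<chi> i j. if i = 1 \<and> j = 1 then 1 else 0)"

lemma E11_idem: "E11 ** E11 = E11"
  by (simp add: E11_def matrix_matrix_mult_def vec_eq_iff sum_2 forall_2)

lemma sigma_z_eq: "sigma_z = cmat_scale 2 E11 - mat 1"
  by (simp add: sigma_z_def E11_def cmat_scale_def mat_def vec_eq_iff forall_2)

definition Eph :: "real \<Rightarrow> complex^2^2" where
  "Eph phi = mexp (cmat_scale (\<i> * complex_of_real phi) sigma_z)"

lemma Eph_mulv: "Eph phi *v y = vector [exp (\<i> * complex_of_real phi) * y$1, exp (- (\<i> * complex_of_real phi)) * y$2]"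
  unfolding Eph_def sigma_z_eq mexp_proj[OF E11_idem]
  by (simp add: vec_eq_iff forall_2 matrix_vector_mult_def sum_2 cmat_scale_def E11_def mat_def)

lemma Rmat_mulv: "Rmat x *v y = vector [complex_of_real x * y$1 + complex_of_real (sqrt (1 - x^2)) * y$2,
                                        complex_of_real (sqrt (1 - x^2)) * y$1 - complex_of_real x * y$2]"
  by (simp add: Rmat_def vec_eq_iff forall_2 matrix_vector_mult_def sum_2)

lemma refl2_sq:
  fixes a c :: complex assumes h: "a*a + c*c = 1"
  shows "(vector [vector [a, c], vector [c, -a]] :: complex^2^2) ** (vector [vector [a, c], vector [c, -a]] :: complex^2^2) = mat 1"
proof -
  show ?thesis
    unfolding matrix_matrix_mult_def mat_def
    apply (simp add: vec_eq_iff forall_2 sum_2)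
    using h by (simp add: algebra_simps)
qed

lemma Rmat_sq: "\<bar>x\<bar> \<le> 1 \<Longrightarrow> Rmat x ** Rmat x = mat 1"
proof -
  assume "\<bar>x\<bar> \<le> 1"
  then have "x^2 \<le> 1" by (simp add: abs_square_le_1)
  then have h: "(sqrt (1 - x^2))^2 = 1 - x^2" by simp
  have h2: "complex_of_real x * complex_of_real x + complex_of_real (sqrt (1 - x\<^sup>2)) * complex_of_real (sqrt (1 - x\<^sup>2)) = 1"
    by (metis (no_types, lifting) add_diff_cancel_left' diff_add_cancel h of_real_1 of_real_add of_real_mult power2_eq_square)
  show ?thesis unfolding Rmat_def by (rule refl2_sq[OF h2])
qed

definition Dv :: "complex^'n \<Rightarrow> complex^'n \<Rightarrow> complex^2 \<Rightarrow> complex^'n" where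
  "Dv a b y = y$1 *s a + y$2 *s b"

lemma Dv_phase:
  assumes "P ** P = P" "P *v a = a" "P *v b = 0"
  shows "phase_op phi P *v Dv a b y = Dv a b (Eph phi *v y)"
  unfolding Dv_def Eph_mulv
  by (simp add: matrix_vector_right_distrib vector_scalar_commute phase_img[OF assms(1,2)]
      phase_ker[OF assms(1,3)] vec_eq_iff)

lemma Dv_U:
  assumes "U *v a = complex_of_real x *s c + complex_of_real (sqrt (1 - x^2)) *s d"
    "U *v b = complex_of_real (sqrt (1 - x^2)) *s c - complex_of_real x *s d"
  shows "U *v Dv a b y = Dv c d (Rmat x *v y)"
  unfolding Dv_def Rmat_mulv
  by (simp add: matrix_vector_right_distrib vector_scalar_commute assms vec_eq_iff algebra_simps)

lemma Dv_Uadj: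
  assumes "unitary_mat U" "\<bar>x\<bar> \<le> 1"
    "U *v a = complex_of_real x *s c + complex_of_real (sqrt (1 - x^2)) *s d"
    "U *v b = complex_of_real (sqrt (1 - x^2)) *s c - complex_of_real x *s d"
  shows "adj U *v Dv c d y = Dv a b (Rmat x *v y)"
proof -
  have "Dv c d y = Dv c d (Rmat x *v (Rmat x *v y))"
    by (simp add: matrix_vector_mul_assoc Rmat_sq[OF assms(2)])
  also have "\<dots> = U *v Dv a b (Rmat x *v y)"
    by (rule Dv_U[OF assms(3,4), symmetric])
  finally show ?thesis using unitary_left[OF assms(1)] by simp
qed

lemma Dv_mprod:
  assumes "\<And>j y. F j *v Dv a b y = Dv a b (G j *v y)"
  shows "mprod F m *v Dv a b y = Dv a b (mprod G m *v y)"
proof (induction m arbitrary: y)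
  case 0 then show ?case by simp
next
  case (Suc m)
  show ?case
    by (simp add: matrix_vector_mul_assoc[symmetric] assms Suc)
qed

lemma mprod_even: "mprod h (2*m) = mprod (\<lambda>j. h (2*j-1) ** h (2*j)) m"
proof (induction m)
  case 0 then show ?case by simp
next
  case (Suc m)
  have e: "2 * Suc m = Suc (Suc (2*m))" by simp
  have "mprod h (2 * Suc m) = mprod h (2*m) ** h (Suc (2*m)) ** h (Suc (Suc (2*m)))"
    by (simp only: e mprod.simps)
  also have "\<dots> = mprod (\<lambda>j. h (2*j-1) ** h (2*j)) m ** (h (2 * Suc m - 1) ** h (2 * Suc m))"
    by (simp only: Suc.IH matrix_mul_assoc e) simp
  finally show ?case by simp
qed

lemma mprod_odd: "mprod h (2*m+1) = h 1 ** mprod (\<lambda>j. h (2*j) ** h (2*j+1)) m"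
proof (induction m)
  case 0 then show ?case by simp
next
  case (Suc m)
  have e: "2 * Suc m + 1 = Suc (Suc (2*m+1))" by simp
  have "mprod h (2 * Suc m + 1) = mprod h (2*m+1) ** h (Suc (2*m+1)) ** h (Suc (Suc (2*m+1)))"
    by (simp only: e mprod.simps)
  also have "\<dots> = h 1 ** (mprod (\<lambda>j. h (2*j) ** h (2*j+1)) m ** (h (2 * Suc m) ** h (2 * Suc m + 1)))"
    by (simp only: Suc.IH matrix_mul_assoc) simp
  finally show ?case by simp
qed

lemma qsp_prod_eq: "qsp_prod n phi x = mprod (\<lambda>j. Eph (phi j) ** Rmat x) n"
  unfolding qsp_prod_def Eph_def ..

lemma U_Phi_action:
  assumes U: "unitary_mat U" and P: "orth_proj Pr" and Pt: "orth_proj Prt"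
    and x: "\<bar>x\<bar> \<le> 1"
    and v: "Pr *v v = v" and v': "Pr *v v' = 0" and w: "Prt *v w = w" and w': "Prt *v w' = 0"
    and Uv: "U *v v = complex_of_real x *s w + complex_of_real (sqrt (1 - x^2)) *s w'"
    and Uv': "U *v v' = complex_of_real (sqrt (1 - x^2)) *s w - complex_of_real x *s w'"
  shows "U_Phi n phi U Pr Prt *v Dv v v' y =
          (if odd n then Dv w w' (qsp_prod n phi x *v y) else Dv v v' (qsp_prod n phi x *v y))"
proof -
  have PP: "Pr ** Pr = Pr" and PPt: "Prt ** Prt = Prt" using P Pt by (auto simp: orth_proj_def)
  have blk: "(phase_op p1 Pr ** adj U ** phase_op p2 Prt ** U) *v Dv v v' y
      = Dv v v' ((Eph p1 ** Rmat x ** Eph p2 ** Rmat x) *v y)" for p1 p2 y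
    by (simp only: matrix_vector_mul_assoc[symmetric] Dv_U[OF Uv Uv'] Dv_Uadj[OF U x Uv Uv']
          Dv_phase[OF PPt w w'] Dv_phase[OF PP v v'])
  show ?thesis
  proof (cases "odd n")
    case True
    then obtain m where n: "n = 2*m+1" using oddE by blast
    have m: "(n - 1) div 2 = m" using n by simp
    have eU: "U_Phi n phi U Pr Prt = phase_op (phi 1) Prt ** U **
        mprod (\<lambda>j. phase_op (phi (2*j)) Pr ** adj U ** phase_op (phi (2*j+1)) Prt ** U) m"
      unfolding U_Phi_def m using True by simp
    have eQ: "qsp_prod n phi x = Eph (phi 1) ** Rmat x **
        mprod (\<lambda>j. Eph (phi (2*j)) ** Rmat x ** Eph (phi (2*j+1)) ** Rmat x) m"
      unfolding qsp_prod_eq n mprod_odd by (simp add: matrix_mul_assoc)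
    show ?thesis
      unfolding eU eQ using True
      by (simp only: not_False_eq_True if_True matrix_vector_mul_assoc[symmetric] Dv_mprod[OF blk] Dv_U[OF Uv Uv']
          Dv_phase[OF PPt w w'])
  next
    case False
    then obtain m where n: "n = 2*m" using evenE by blast
    have m: "n div 2 = m" using n by simp
    have eU: "U_Phi n phi U Pr Prt =
        mprod (\<lambda>j. phase_op (phi (2*j-1)) Pr ** adj U ** phase_op (phi (2*j)) Prt ** U) m"
      unfolding U_Phi_def m using False by simp
    have eQ: "qsp_prod n phi x =
        mprod (\<lambda>j. Eph (phi (2*j-1)) ** Rmat x ** Eph (phi (2*j)) ** Rmat x) m"
      unfolding qsp_prod_eq n mprod_even by (simp add: matrix_mul_assoc)
    show ?thesis
      unfolding eU eQ using False
      by (simp only: not_True_eq_False if_False matrix_vector_mul_assoc[symmetric] Dv_mprod[OF blk])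
  qed
qed

lemma cinner_self_real: "cnj (cinner x x) = cinner x x"
  by (simp add: cinner_cnj)

lemma scal_lem:
  fixes a b :: complex and c s :: real
  assumes h1: "c \<noteq> 0" and h2: "c * c = 1 - s * s"
  shows "complex_of_real (1/c) * (a - complex_of_real s * (complex_of_real s * a + complex_of_real c * (complex_of_real (1/c) * b)))
       = complex_of_real c * a - complex_of_real s * (complex_of_real (1/c) * b)"
proof -
  have h3: "complex_of_real c * complex_of_real c = 1 - complex_of_real s * complex_of_real s"
    using h2 by (metis of_real_1 of_real_diff of_real_mult)
  have cn: "complex_of_real c \<noteq> 0" using h1 by simp
  have h4: "complex_of_real c * complex_of_real c + complex_of_real s * complex_of_real s = 1"
    using h3 by simp
  have h5: "a = a * (complex_of_real c * complex_of_real c) + a * (complex_of_real s * complex_of_real s)"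
    by (metis h4 distrib_left mult.right_neutral)
  show ?thesis using h5 cn by (simp add: field_simps)
qed

lemma pair_exists:
  fixes U Pr Prt :: "complex^'n^'n"
  assumes U: "unitary_mat U" and P: "orth_proj Pr" and Pt: "orth_proj Prt"
    and v: "Pr *v v = v" and w: "Prt *v w = w" and vv: "cinner v v = 1"
    and ww: "cinner w w = 1 \<or> (w = 0 \<and> s = 0)" and s0: "0 \<le> s"
    and Av: "Prt *v (U *v v) = complex_of_real s *s w"
    and Aw: "Pr *v (adj U *v w) = complex_of_real s *s v"
  shows "s \<le> 1 \<and> (\<exists>v' w'. Pr *v v' = 0 \<and> Prt *v w' = 0 \<and>
      U *v v = complex_of_real s *s w + complex_of_real (sqrt (1 - s^2)) *s w' \<and>
      U *v v' = complex_of_real (sqrt (1 - s^2)) *s w - complex_of_real s *s w')"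
proof -
  define u where "u = U *v v - complex_of_real s *s w"
  have Pu: "Prt *v u = 0"
    unfolding u_def by (simp add: matrix_vector_mult_diff_distrib Av vector_scalar_commute w)
  have wws: "complex_of_real s ^ 2 * cinner w w = complex_of_real s ^ 2" using ww by auto
  have c1: "cinner (U *v v) (U *v v) = 1"
    by (simp add: cinner_adj unitary_left[OF U] vv)
  have c2: "cinner (U *v v) w = complex_of_real s * cinner w w"
  proof -
    have "cinner (U *v v) w = cinner (U *v v) (Prt *v w)" using w by simp
    also have "\<dots> = cinner (Prt *v (U *v v)) w" using proj_sym[OF Pt] by simp
    finally show ?thesis by (simp add: Av cinner_scale_left)
  qed
  have c3: "cinner w (U *v v) = complex_of_real s * cinner w w"
    using arg_cong[OF c2, of cnj] by (simp add: cinner_cnj cinner_self_real)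
  have uu: "cinner u u = 1 - complex_of_real (s^2)"
    unfolding u_def
    by (simp add: cinner_diff_left cinner_diff_right cinner_scale_left cinner_scale_right c1 c2 c3)
       (metis (no_types, lifting) wws power2_eq_square mult.assoc of_real_power)
  have e1: "(\<Sum>i\<in>UNIV. (cmod (u $ i))^2) = 1 - s^2"
    using uu unfolding cinner_self by (metis of_real_1 of_real_diff of_real_eq_iff)
  have e2: "0 \<le> (\<Sum>i\<in>UNIV. (cmod (u $ i))^2)" by (simp add: sum_nonneg)
  have "0 \<le> 1 - s^2" by (subst e1[symmetric]) (rule e2)
  then have s2: "s^2 \<le> 1" by simp
  then have s1: "s \<le> 1" using s0 by (simp add: power_le_one_iff)
  define c where "c = sqrt (1 - s^2)"
  have cc: "c^2 = 1 - s^2" unfolding c_def using s2 by simp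
  have c0: "0 \<le> c" unfolding c_def using s2 by simp
  show ?thesis
  proof (cases "c = 0")
    case True
    then have "s^2 = 1" using cc by simp
    then have "s = 1" using s0 s1 by (metis power_one abs_of_nonneg power2_eq_iff_nonneg zero_le_one)
    then have "cinner u u = 0" using uu by simp
    then have "u = 0" by (rule cinner_self_eq0)
    then have "U *v v = complex_of_real s *s w" unfolding u_def by simp
    then show ?thesis using s1 True \<open>s = 1\<close> unfolding c_def[symmetric]
      by (intro conjI exI[of _ 0]) auto
  next
    case False
    then have cpos: "c > 0" using c0 by simp
    define w' where "w' = complex_of_real (1/c) *s u"
    define v' where "v' = complex_of_real (1/c) *s (adj U *v w - complex_of_real s *s v)"
    have "Pr *v v' = 0"
      unfolding v'_def by (simp add: vector_scalar_commute matrix_vector_mult_diff_distrib Aw v)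
    moreover have "Prt *v w' = 0"
      unfolding w'_def by (simp add: vector_scalar_commute Pu)
    moreover have Uv: "U *v v = complex_of_real s *s w + complex_of_real c *s w'"
      unfolding w'_def u_def using cpos by (simp add: vector_smult_assoc)
    moreover have "U *v v' = complex_of_real c *s w - complex_of_real s *s w'"
    proof -
      have "U *v v' = complex_of_real (1/c) *s (w - complex_of_real s *s (U *v v))"
        unfolding v'_def by (simp add: vector_scalar_commute matrix_vector_mult_diff_distrib unitary_right[OF U])
      also have "\<dots> = complex_of_real c *s w - complex_of_real s *s w'"
      proof -
        have cc': "c * c = 1 - s * s" using cc by (simp add: power2_eq_square)
        have cn: "c \<noteq> 0" using cpos by simp
        show ?thesis unfolding Uv w'_def vec_eq_iff
          by (auto simp only: vector_smult_component vector_add_component vector_minus_component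
              intro!: scal_lem[OF cn cc'])
      qed
      finally show ?thesis .
    qed
    ultimately show ?thesis using s1 unfolding c_def by blast
  qed
qed

lemma outer_sum_proj:
  assumes P: "orth_proj Pr" and b: "\<forall>i\<in>I. Pr *v b i = b i"
  shows "(\<Sum>i\<in>I. cmat_scale (g i) (outer (a i) (b i))) *v (Pr *v x)
       = (\<Sum>i\<in>I. cmat_scale (g i) (outer (a i) (b i))) *v x"
proof -
  have "cinner (b i) (Pr *v x) = cinner (b i) x" if "i \<in> I" for i
    using proj_sym[OF P, of "b i" x] b that by simp
  then show ?thesis
    by (simp add: sum_mulv cs_mulv outer_mulv)
qed

lemma outer_sum_basis:
  fixes N k :: nat
  assumes o: "\<forall>i<N. cinner (b i) (b k) = (if i = k then 1 else 0)"
  shows "(\<Sum>i\<in>{..<N}. cmat_scale (g i) (outer (a i) (b i))) *v b k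
       = (if k < N then g k *s a k else 0)"
proof -
  have "(\<Sum>i\<in>{..<N}. cmat_scale (g i) (outer (a i) (b i))) *v b k
      = (\<Sum>i\<in>{..<N}. if i = k then g i *s a i else 0)"
    unfolding sum_mulv cs_mulv outer_mulv
    by (rule sum.cong) (auto simp: o)
  also have "\<dots> = (if k < N then g k *s a k else 0)"
    using sum.delta[of "{..<N}" k "\<lambda>i. g i *s a i"] by simp
  finally show ?thesis .
qed

lemma mulv_lincomb: "(M::complex^'n^'m) *v (\<Sum>k\<in>I. c k *s v k) = (\<Sum>k\<in>I. c k *s (M *v v k))"
  by (simp add: mulv_sum vector_scalar_commute)

lemma Dv_axis: "Dv a b (axis 1 1) = a"
  by (simp add: Dv_def axis_def)

lemma mulv_axis1: "((Q::complex^2^2) *v axis 1 1) $ 1 = Q $ 1 $ 1"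
  by (simp add: matrix_vector_mult_def axis_def sum_2)

lemma proj_Dv: "Pr *v a = a \<Longrightarrow> Pr *v b = 0 \<Longrightarrow> Pr *v Dv a b z = z $ 1 *s a"
  by (simp add: Dv_def matrix_vector_right_distrib vector_scalar_commute)

theorem mainTheorem8:
  fixes U Pr Prt :: "complex^'n^'n"
    and n :: nat and phi :: "nat \<Rightarrow> real" and P :: "complex poly"
    and d dt :: nat and s :: "nat \<Rightarrow> real" and psi psit :: "nat \<Rightarrow> complex^'n"
  assumes "unitary_mat U" and "orth_proj Pr" and "orth_proj Prt"
    and "n \<ge> 1"
    and "degree P \<le> n"
    and "\<forall>x\<in>{-1..1}. qsp_prod n phi x $ 1 $ 1 = poly P (complex_of_real x)"
    and "sv_decomp Pr Prt (Prt ** U ** Pr) d dt s psi psit"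
  shows "(if odd n
          then sv_odd (\<lambda>t. poly P (complex_of_real t)) d dt s psi psit = Prt ** U_Phi n phi U Pr Prt ** Pr
          else sv_even (\<lambda>t. poly P (complex_of_real t)) d dt s psi = Pr ** U_Phi n phi U Pr Prt ** Pr)"
proof -
  note U = assms(1) and PP = assms(2) and PT = assms(3) and Pval = assms(6)
  define m where "m = min d dt"
  define f where "f = (\<lambda>t. poly P (complex_of_real t))"
  have onbP: "onb_of_img Pr d psi" and onbT: "onb_of_img Prt dt psit"
    and snn: "\<forall>i<m. 0 \<le> s i"
    and Aeq: "Prt ** U ** Pr = (\<Sum>i<m. cmat_scale (complex_of_real (s i)) (outer (psit i) (psi i)))"
    using assms(7) unfolding sv_decomp_def m_def by auto
  have Ppsi: "Pr *v psi i = psi i" if "i < d" for i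
  proof -
    from onbP that obtain y where "psi i = Pr *v y" unfolding onb_of_img_def by blast
    then show ?thesis using proj_idem[OF PP] by simp
  qed
  have Tpsit: "Prt *v psit i = psit i" if "i < dt" for i
  proof -
    from onbT that obtain y where "psit i = Prt *v y" unfolding onb_of_img_def by blast
    then show ?thesis using proj_idem[OF PT] by simp
  qed
  have orthP: "cinner (psi i) (psi j) = (if i = j then 1 else 0)" if "i < d" "j < d" for i j
    using onbP that unfolding onb_of_img_def by blast
  have orthT: "cinner (psit i) (psit j) = (if i = j then 1 else 0)" if "i < dt" "j < dt" for i j
    using onbT that unfolding onb_of_img_def by blast
  have md: "m \<le> d" and mdt: "m \<le> dt" unfolding m_def by auto
  have Av: "Prt *v (U *v psi j) = (if j < m then complex_of_real (s j) *s psit j else 0)" if j: "j < d" for j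
  proof -
    have "Prt *v (U *v psi j) = (Prt ** U ** Pr) *v psi j"
      by (simp add: matrix_vector_mul_assoc[symmetric] Ppsi[OF j])
    also have "\<dots> = (if j < m then complex_of_real (s j) *s psit j else 0)"
      unfolding Aeq by (rule outer_sum_basis) (use md j in \<open>auto simp: orthP\<close>)
    finally show ?thesis .
  qed
  have adjA: "Pr ** adj U ** Prt = (\<Sum>i<m. cmat_scale (complex_of_real (s i)) (outer (psi i) (psit i)))"
  proof -
    have "Pr ** adj U ** Prt = adj (Prt ** U ** Pr)"
      using PP PT by (simp add: adj_mult orth_proj_def matrix_mul_assoc)
    then show ?thesis unfolding Aeq adj_sum adj_cs_outer .
  qed
  have Aw: "Pr *v (adj U *v psit j) = complex_of_real (s j) *s psi j" if j: "j < m" for j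
  proof -
    have jt: "j < dt" using j mdt by simp
    have "Pr *v (adj U *v psit j) = (Pr ** adj U ** Prt) *v psit j"
      by (simp add: matrix_vector_mul_assoc[symmetric] Tpsit[OF jt])
    also have "\<dots> = complex_of_real (s j) *s psi j"
      unfolding adjA by (subst outer_sum_basis) (use mdt j in \<open>auto simp: orthT\<close>)
    finally show ?thesis .
  qed
  define sj where "sj = (\<lambda>j. if j < m then s j else 0)"
  define wj where "wj = (\<lambda>j. if j < m then psit j else 0)"
  have key: "(if odd n then Prt *v (U_Phi n phi U Pr Prt *v psi j) = f (sj j) *s wj j
              else Pr *v (U_Phi n phi U Pr Prt *v psi j) = f (sj j) *s psi j)" if j: "j < d" for j
  proof -
    have vv: "cinner (psi j) (psi j) = 1" using orthP[OF j j] by simp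
    have ww: "cinner (wj j) (wj j) = 1 \<or> (wj j = 0 \<and> sj j = 0)"
      using orthT mdt unfolding wj_def sj_def by auto
    have s0: "0 \<le> sj j" using snn unfolding sj_def by auto
    have Tw: "Prt *v wj j = wj j" using Tpsit mdt unfolding wj_def by auto
    have Av': "Prt *v (U *v psi j) = complex_of_real (sj j) *s wj j"
      using Av[OF j] unfolding sj_def wj_def by auto
    have Aw': "Pr *v (adj U *v wj j) = complex_of_real (sj j) *s psi j"
      using Aw unfolding sj_def wj_def by auto
    obtain v' w' where s1: "sj j \<le> 1" and v': "Pr *v v' = 0" and w': "Prt *v w' = 0"
      and Uv: "U *v psi j = complex_of_real (sj j) *s wj j + complex_of_real (sqrt (1 - (sj j)^2)) *s w'"
      and Uv': "U *v v' = complex_of_real (sqrt (1 - (sj j)^2)) *s wj j - complex_of_real (sj j) *s w'"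
      using pair_exists[OF U PP PT Ppsi[OF j] Tw vv ww s0 Av' Aw'] by blast
    have abs1: "\<bar>sj j\<bar> \<le> 1" using s0 s1 by simp
    have act: "U_Phi n phi U Pr Prt *v psi j =
        (if odd n then Dv (wj j) w' (qsp_prod n phi (sj j) *v axis 1 1)
         else Dv (psi j) v' (qsp_prod n phi (sj j) *v axis 1 1))"
      using U_Phi_action[OF U PP PT abs1 Ppsi[OF j] v' Tw w' Uv Uv', of n phi "axis 1 1"]
      by (simp add: Dv_axis)
    have Q: "qsp_prod n phi (sj j) $ 1 $ 1 = f (sj j)"
      using Pval s0 s1 unfolding f_def by auto
    show ?thesis
      using act by (simp add: proj_Dv[OF Tw w'] proj_Dv[OF Ppsi[OF j] v'] mulv_axis1 Q)
  qed
  obtain c where cx: "\<And>x. Pr *v x = (\<Sum>i<d. c x i *s psi i)"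
  proof -
    have "\<forall>x. \<exists>cc. Pr *v x = (\<Sum>i<d. cc i *s psi i)"
      using onbP unfolding onb_of_img_def by blast
    then show ?thesis using that by metis
  qed
  have R_proj: "(A ** B ** Pr) *v x = (A ** B ** Pr) *v (Pr *v x)" for A B x
    by (simp add: matrix_vector_mul_assoc[symmetric] proj_idem[OF PP])
  show ?thesis
  proof (cases "odd n")
    case True
    let ?L = "(\<Sum>i<m. cmat_scale (f (s i)) (outer (psit i) (psi i)))"
    have L: "sv_odd (\<lambda>t. poly P (complex_of_real t)) d dt s psi psit = ?L"
      unfolding sv_odd_def f_def m_def ..
    have "?L = Prt ** U_Phi n phi U Pr Prt ** Pr"
    proof (subst matrix_eq, intro allI)
      fix x
      have "?L *v x = ?L *v (Pr *v x)"
        by (rule outer_sum_proj[OF PP, symmetric]) (use Ppsi md in auto)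
      also have "\<dots> = (\<Sum>k<d. c x k *s (?L *v psi k))"
        unfolding cx mulv_lincomb ..
      also have "\<dots> = (\<Sum>k<d. c x k *s ((Prt ** U_Phi n phi U Pr Prt ** Pr) *v psi k))"
      proof (rule sum.cong[OF refl])
        fix k assume k: "k \<in> {..<d}"
        have "?L *v psi k = (if k < m then f (s k) *s psit k else 0)"
          by (rule outer_sum_basis) (use md k in \<open>auto simp: orthP\<close>)
        also have "\<dots> = (Prt ** U_Phi n phi U Pr Prt ** Pr) *v psi k"
          using key[of k] k True
          by (simp add: matrix_vector_mul_assoc[symmetric] Ppsi sj_def wj_def)
        finally show "c x k *s (?L *v psi k) = c x k *s ((Prt ** U_Phi n phi U Pr Prt ** Pr) *v psi k)"
          by simp
      qed
      also have "\<dots> = (Prt ** U_Phi n phi U Pr Prt ** Pr) *v x"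
        unfolding R_proj[of _ _ x] cx mulv_lincomb ..
      finally show "?L *v x = (Prt ** U_Phi n phi U Pr Prt ** Pr) *v x" .
    qed
    then show ?thesis using True L by simp
  next
    case False
    let ?L = "(\<Sum>i<d. cmat_scale (f (sj i)) (outer (psi i) (psi i)))"
    have L: "sv_even (\<lambda>t. poly P (complex_of_real t)) d dt s psi = ?L"
      unfolding sv_even_def f_def m_def sj_def ..
    have "?L = Pr ** U_Phi n phi U Pr Prt ** Pr"
    proof (subst matrix_eq, intro allI)
      fix x
      have "?L *v x = ?L *v (Pr *v x)"
        by (rule outer_sum_proj[OF PP, symmetric]) (use Ppsi in auto)
      also have "\<dots> = (\<Sum>k<d. c x k *s (?L *v psi k))"
        unfolding cx mulv_lincomb ..
      also have "\<dots> = (\<Sum>k<d. c x k *s ((Pr ** U_Phi n phi U Pr Prt ** Pr) *v psi k))"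
      proof (rule sum.cong[OF refl])
        fix k assume k: "k \<in> {..<d}"
        have "?L *v psi k = (if k < d then f (sj k) *s psi k else 0)"
          by (rule outer_sum_basis) (use k in \<open>auto simp: orthP\<close>)
        also have "\<dots> = (Pr ** U_Phi n phi U Pr Prt ** Pr) *v psi k"
          using key[of k] k False
          by (simp add: matrix_vector_mul_assoc[symmetric] Ppsi)
        finally show "c x k *s (?L *v psi k) = c x k *s ((Pr ** U_Phi n phi U Pr Prt ** Pr) *v psi k)"
          by simp
      qed
      also have "\<dots> = (Pr ** U_Phi n phi U Pr Prt ** Pr) *v x"
        unfolding R_proj[of _ _ x] cx mulv_lincomb ..
      finally show "?L *v x = (Pr ** U_Phi n phi U Pr Prt ** Pr) *v x" .
    qed
    then show ?thesis using False L by simp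
  qed
qed

end
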